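(* Let $m$ be a positive integer and let $p$ be a positive integer which is a multiple of $m$ if $m$ is odd and a multiple of $2m$ if $m$ is even. Let $S$ be a $p$-periodic sequence of elements of $\mathbb{Z}/m\mathbb{Z}$ whose orbit is $(p,p)$-periodic. Then the triangles $\nabla S[\lambda p]$ are balanced for all non-negative integers $\lambda$ if and only if there exist two distinct positive integers $\lambda_1,\lambda_2$ such that $\nabla S[\lambda_1p]$ and $\nabla S[\lambda_2p]$ are balanced.
   Context: A sequence $S=(u_j)_{j\in\mathbb{Z}}$ is $p$-periodic if $u_{j+p}=u_j$ for all $j$. $S[n]=(u_0,\dots,u_{n-1})$. The orbit of $S$ is $(a_{i,j})_{(i,j)\in\mathbb{N}\times\mathbb{Z}}$ with $a_{0,j}=u_j$, $a_{i,j}=-a_{i-1,j}-a_{i-1,j+1}$ for $i\ge1$; it is $(p,q)$-periodic if $a_{i+q,j}=a_{i,j+p}=a_{i,j}$ for all $(i,j)$. For a finite sequence $(u_0,\dots,u_{n-1})$, $\nabla(u_0,\dots,u_{n-1})=(a_{i,j})_{i,j\ge0,i+j<n}$ defined by the same rule; it is balanced if every element of $\mathbb{Z}/m\mathbb{Z}$ occurs the same number of times among its entries. *)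

theory Defs
  imports Main
begin

text \<open>Elements of Z/mZ are represented by their canonical representatives in {0..<m}
  (integers); arithmetic is taken mod m.\<close>

fun orbit :: "int \<Rightarrow> (int \<Rightarrow> int) \<Rightarrow> nat \<Rightarrow> int \<Rightarrow> int" where
  "orbit m u 0 j = u j"
| "orbit m u (Suc i) j = (- orbit m u i j - orbit m u i (j + 1)) mod m"

definition periodic_seq :: "nat \<Rightarrow> (int \<Rightarrow> int) \<Rightarrow> bool" where
  "periodic_seq p u \<longleftrightarrow> (\<forall>j. u (j + int p) = u j)"

definition orbit_periodic :: "int \<Rightarrow> nat \<Rightarrow> nat \<Rightarrow> (int \<Rightarrow> int) \<Rightarrow> bool" where
  "orbit_periodic m p q u \<longleftrightarrow>
     (\<forall>i j. orbit m u (i + q) j = orbit m u i j \<and> orbit m u i (j + int p) = orbit m u i j)"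

definition prefix_seq :: "(int \<Rightarrow> int) \<Rightarrow> nat \<Rightarrow> int list" where
  "prefix_seq u n = map (\<lambda>j. u (int j)) [0..<n]"

fun nabla :: "int \<Rightarrow> int list \<Rightarrow> nat \<Rightarrow> nat \<Rightarrow> int" where
  "nabla m xs 0 j = xs ! j"
| "nabla m xs (Suc i) j = (- nabla m xs i j - nabla m xs i (Suc j)) mod m"

definition triangle_positions :: "nat \<Rightarrow> (nat \<times> nat) set" where
  "triangle_positions n = {(i, j). i + j < n}"

definition balanced :: "int \<Rightarrow> int list \<Rightarrow> bool" where
  "balanced m xs \<longleftrightarrow>
     (\<forall>r\<in>{0..<m}. \<forall>s\<in>{0..<m}.
        card {(i, j) \<in> triangle_positions (length xs). nabla m xs i j = r}
      = card {(i, j) \<in> triangle_positions (length xs). nabla m xs i j = s})"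

end

theory Submission imports Defs begin

lemma sum_split_nat: fixes a b :: nat shows "(\<Sum>i<a+b. f i) = (\<Sum>i<a. f i) + (\<Sum>i<b. (f (a+i)::nat))"
  by (induction b) (simp_all add: add.assoc)

lemma sum_shift_period:
  fixes f :: "nat \<Rightarrow> nat" and p c :: nat
  assumes "\<And>j. f (j + p) = (f j :: nat)"
  shows "(\<Sum>j<p. f (j + c)) = (\<Sum>j<p. f j)"
proof (induction c)
  case (Suc c)
  have "(\<Sum>j<Suc p. f (j + c)) = f c + (\<Sum>j<p. f (Suc j + c))"
    by (subst sum.lessThan_Suc_shift) simp
  moreover have "(\<Sum>j<Suc p. f (j + c)) = (\<Sum>j<p. f (j + c)) + f (p + c)" by simp
  moreover have "f (p + c) = f c" using assms[of c] by (simp add: add.commute)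
  ultimately show ?case using Suc by simp
qed simp

lemma sum_periodic_mult:
  fixes f :: "nat \<Rightarrow> nat" and p c l :: nat
  assumes "\<And>j. f (j + p) = (f j :: nat)"
  shows "(\<Sum>j<l*p. f (j + c)) = l * (\<Sum>j<p. f j)"
proof (induction l)
  case (Suc l)
  have "(\<Sum>j<Suc l*p. f (j + c)) = (\<Sum>j<p. f (j + c)) + (\<Sum>j<l*p. f (p + j + c))"
    using sum_split_nat[where a=p and b="l*p" and f="\<lambda>j. f (j + c)"] by (simp add: add.assoc)
  also have "(\<Sum>j<l*p. f (p + j + c)) = (\<Sum>j<l*p. f (j + c))"
    by (intro sum.cong refl) (metis add.assoc add.commute assms)
  finally show ?case using Suc sum_shift_period[of f p c, OF assms] by simp
qed simp

definition CC :: "(nat \<Rightarrow> nat \<Rightarrow> nat) \<Rightarrow> nat \<Rightarrow> nat" where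
  "CC h n = (\<Sum>i<n. \<Sum>j<n-i. h i j)"

lemma CC_step:
  fixes h :: "nat \<Rightarrow> nat \<Rightarrow> nat" and p l :: nat
  assumes hi: "\<And>i j. h (i + p) j = h i j" and hj: "\<And>i j. h i (j + p) = h i j"
  shows "CC h (Suc l * p) = CC h (l*p) + (\<Sum>i<p. \<Sum>j<p-i. h i j) + l * (\<Sum>i<p. \<Sum>j<p. h i j)"
proof -
  have "CC h (Suc l * p) = (\<Sum>i<p. \<Sum>j<p + l*p - i. h i j) + (\<Sum>i<l*p. \<Sum>j<p + l*p - (p+i). h (p+i) j)"
    unfolding CC_def using sum_split_nat[where a=p and b="l*p" and f="\<lambda>i. \<Sum>j<p + l*p - i. h i j"] by simp
  also have "(\<Sum>i<l*p. \<Sum>j<p + l*p - (p+i). h (p+i) j) = CC h (l*p)"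
    unfolding CC_def by (intro sum.cong refl) (simp, metis add.commute hi)
  also have "(\<Sum>i<p. \<Sum>j<p + l*p - i. h i j) = (\<Sum>i<p. (\<Sum>j<p-i. h i j) + l * (\<Sum>j<p. h i j))"
  proof (intro sum.cong refl)
    fix i assume "i \<in> {..<p}"
    hence "p + l*p - i = (p - i) + l*p" by auto
    hence "(\<Sum>j<p + l*p - i. h i j) = (\<Sum>j<p-i. h i j) + (\<Sum>j<l*p. h i (j + (p-i)))"
      using sum_split_nat[where a="p-i" and b="l*p" and f="h i"] by (simp add: add.commute)
    also have "(\<Sum>j<l*p. h i (j + (p-i))) = l * (\<Sum>j<p. h i j)"
      by (rule sum_periodic_mult) (rule hj)
    finally show "(\<Sum>j<p + l*p - i. h i j) = (\<Sum>j<p-i. h i j) + l * (\<Sum>j<p. h i j)" .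
  qed
  also have "\<dots> = (\<Sum>i<p. \<Sum>j<p-i. h i j) + l * (\<Sum>i<p. \<Sum>j<p. h i j)"
    by (simp add: sum.distrib sum_distrib_left)
  finally show ?thesis by simp
qed

lemma CC_closed:
  fixes h :: "nat \<Rightarrow> nat \<Rightarrow> nat" and p l :: nat
  assumes hi: "\<And>i j. h (i + p) j = h i j" and hj: "\<And>i j. h i (j + p) = h i j"
  shows "2 * CC h (l * p) = 2 * l * (\<Sum>i<p. \<Sum>j<p-i. h i j) + l * (l - 1) * (\<Sum>i<p. \<Sum>j<p. h i j)"
proof (induction l)
  case 0 then show ?case by (simp add: CC_def)
next
  case (Suc l)
  show ?case unfolding CC_step[of h p l, OF hi hj] using Suc
    by (cases l) (simp_all add: algebra_simps)
qed

lemma nabla_orbit: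
  "i + j < n \<Longrightarrow> nabla m (prefix_seq u n) i j = orbit m u i (int j)"
proof (induction i arbitrary: j)
  case 0 then show ?case by (simp add: prefix_seq_def)
next
  case (Suc i)
  then show ?case by (simp add: add.commute)
qed

lemma card_tri:
  "card {(i, j) \<in> triangle_positions n. P i j} = CC (\<lambda>i j. if P i j then 1 else 0) n"
proof -
  have "{(i, j) \<in> triangle_positions n. P i j} = (SIGMA i:{..<n}. {j. j < n - i \<and> P i j})"
    by (auto simp: triangle_positions_def)
  hence "card {(i, j) \<in> triangle_positions n. P i j} = (\<Sum>i<n. card {j. j < n - i \<and> P i j})"
    by (simp add: card_SigmaI)
  also have "\<dots> = CC (\<lambda>i j. if P i j then 1 else 0) n"
    unfolding CC_def
  proof (intro sum.cong refl)
    fix i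
    have "{j. j < n - i \<and> P i j} = {j\<in>{..<n-i}. P i j}" by auto
    thus "card {j. j < n - i \<and> P i j} = (\<Sum>j<n - i. if P i j then 1 else 0)"
      by (simp add: sum.If_cases Int_def)
  qed
  finally show ?thesis .
qed

lemma cancel_lemma:
  fixes l1 l2 :: nat and Tr Ts Qr Qs :: nat
  assumes "0 < l1" "0 < l2" "l1 \<noteq> l2"
    and e1: "2 * l1 * Tr + l1 * (l1 - 1) * Qr = 2 * l1 * Ts + l1 * (l1 - 1) * Qs"
    and e2: "2 * l2 * Tr + l2 * (l2 - 1) * Qr = 2 * l2 * Ts + l2 * (l2 - 1) * Qs"
  shows "Tr = Ts \<and> Qr = Qs"
proof -
  define a where "a = int Tr - int Ts"
  define b where "b = int Qr - int Qs"
  obtain k1 where k1: "l1 = Suc k1" using assms(1) by (cases l1) auto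
  obtain k2 where k2: "l2 = Suc k2" using assms(2) by (cases l2) auto
  have E1: "int (2 * l1 * Tr + l1 * k1 * Qr) = int (2 * l1 * Ts + l1 * k1 * Qs)"
    using e1 k1 by simp
  have f1: "int l1 * (2 * a + (int l1 - 1) * b) = 0"
    using E1 unfolding a_def b_def k1 by (simp add: algebra_simps)
  have E2: "int (2 * l2 * Tr + l2 * k2 * Qr) = int (2 * l2 * Ts + l2 * k2 * Qs)"
    using e2 k2 by simp
  have f2: "int l2 * (2 * a + (int l2 - 1) * b) = 0"
    using E2 unfolding a_def b_def k2 by (simp add: algebra_simps)
  have g1: "2 * a + (int l1 - 1) * b = 0" using f1 assms(1) by simp
  have g2: "2 * a + (int l2 - 1) * b = 0" using f2 assms(2) by simp
  have h12: "(int l1 - 1) * b = (int l2 - 1) * b" using g1 g2 by linarith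
  have "(int l1 - int l2) * b = (int l1 - 1) * b - (int l2 - 1) * b" by (simp add: algebra_simps)
  hence "(int l1 - int l2) * b = 0" using h12 by simp
  moreover have "int l1 - int l2 \<noteq> 0" using assms(3) by simp
  ultimately
  have "b = 0" by simp
  hence "a = 0" using g1 by simp
  thus ?thesis using \<open>b = 0\<close> unfolding a_def b_def by simp
qed

theorem proposition14:
  fixes m :: int and p :: nat and u :: "int \<Rightarrow> int"
  assumes m_pos: "m > 0"
    and p_pos: "p > 0"
    and p_odd: "odd m \<Longrightarrow> m dvd int p"
    and p_even: "even m \<Longrightarrow> 2 * m dvd int p"
    and vals: "\<And>j. u j \<in> {0..<m}"
    and per: "periodic_seq p u"
    and orb_per: "orbit_periodic m p p u"
  shows "(\<forall>l::nat. balanced m (prefix_seq u (l * p))) \<longleftrightarrow>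
         (\<exists>l1 l2::nat. 0 < l1 \<and> 0 < l2 \<and> l1 \<noteq> l2 \<and>
            balanced m (prefix_seq u (l1 * p)) \<and> balanced m (prefix_seq u (l2 * p)))"
proof -
  define h where "h = (\<lambda>r i j. if orbit m u i (int j) = r then 1 else (0::nat))"
  define T where "T = (\<lambda>r. \<Sum>i<p. \<Sum>j<p-i. h r i j)"
  define Q where "Q = (\<lambda>r. \<Sum>i<p. \<Sum>j<p. h r i j)"
  have hi: "\<And>r i j. h r (i + p) j = h r i j"
    using orb_per unfolding orbit_periodic_def h_def by simp
  have hj: "\<And>r i j. h r i (j + p) = h r i j"
    using orb_per unfolding orbit_periodic_def h_def by simp
  have cnt: "card {(i, j) \<in> triangle_positions n. nabla m (prefix_seq u n) i j = r} = CC (h r) n"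
    for n r
  proof -
    have "{(i, j) \<in> triangle_positions n. nabla m (prefix_seq u n) i j = r}
        = {(i, j) \<in> triangle_positions n. orbit m u i (int j) = r}"
      using nabla_orbit[of _ _ n m u] by (auto simp: triangle_positions_def)
    thus ?thesis using card_tri[of n "\<lambda>i j. orbit m u i (int j) = r"] by (simp add: h_def)
  qed
  have len: "length (prefix_seq u n) = n" for n by (simp add: prefix_seq_def)
  have bal: "balanced m (prefix_seq u (l * p)) \<longleftrightarrow>
      (\<forall>r\<in>{0..<m}. \<forall>s\<in>{0..<m}. 2 * l * T r + l * (l - 1) * Q r = 2 * l * T s + l * (l - 1) * Q s)"
    for l
  proof -
    have "2 * CC (h r) (l * p) = 2 * l * T r + l * (l - 1) * Q r" for r
      unfolding T_def Q_def by (rule CC_closed[of "h r" p l, OF hi hj])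
    hence "CC (h r) (l * p) = CC (h s) (l * p) \<longleftrightarrow>
        2 * l * T r + l * (l - 1) * Q r = 2 * l * T s + l * (l - 1) * Q s" for r s
      by (metis mult_left_cancel zero_neq_numeral)
    thus ?thesis unfolding balanced_def
      by (simp add: cnt len)
  qed
  show ?thesis
  proof
    assume A: "\<forall>l. balanced m (prefix_seq u (l * p))"
    have B: "balanced m (prefix_seq u (1 * p))" "balanced m (prefix_seq u (2 * p))"
      using A by blast+
    have C: "0 < (1::nat)" "0 < (2::nat)" "(1::nat) \<noteq> 2" by simp_all
    show "\<exists>l1 l2::nat. 0 < l1 \<and> 0 < l2 \<and> l1 \<noteq> l2 \<and>
            balanced m (prefix_seq u (l1 * p)) \<and> balanced m (prefix_seq u (l2 * p))"
      using B C by blast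
  next
    assume "\<exists>l1 l2::nat. 0 < l1 \<and> 0 < l2 \<and> l1 \<noteq> l2 \<and>
            balanced m (prefix_seq u (l1 * p)) \<and> balanced m (prefix_seq u (l2 * p))"
    then obtain l1 l2 :: nat where l: "0 < l1" "0 < l2" "l1 \<noteq> l2"
      "balanced m (prefix_seq u (l1 * p))" "balanced m (prefix_seq u (l2 * p))" by blast
    have eq: "T r = T s \<and> Q r = Q s" if "r \<in> {0..<m}" "s \<in> {0..<m}" for r s
      using cancel_lemma[OF l(1-3)] l(4,5) that unfolding bal by blast
    show "\<forall>l. balanced m (prefix_seq u (l * p))"
      using eq unfolding bal by metis
  qed
qed

end
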